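(* Let $n\ge1$ and let $(f_3,\pi_1,\pi_2)$ be a triple where $f_3$ is a pairing of $[n]\cup[\hat n]$, $\pi_1$ is a set partition of $[n]\cup[\hat n]$ stable by $f_1$ and $f_3$, and $\pi_2$ is a set partition of $[n]\cup[\hat n]$ stable by $f_2$ and $f_3$, all blocks of both having even size. Then every block of $\pi_1$ and every block of $\pi_2$ contains as many hat numbers as non-hat numbers.
   Context: The ground set is $[n]\cup[\hat n]=\{1,\dots,n,\hat1,\dots,\hat n\}$; elements $1,\dots,n$ are non-hat numbers and $\hat1,\dots,\hat n$ are hat numbers. A pairing is a fixed-point-free involution. $f_1=(1\,\hat n)(2\,\hat1)(3\,\hat2)\cdots(n\,\widehat{n-1})$ and $f_2=(1\,\hat1)(2\,\hat2)\cdots(n\,\hat n)$. A set partition is stable by a permutation $f$ if $f$ maps each block onto itself. *)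

theory Defs
  imports Main "HOL-Library.Disjoint_Sets"
begin

text \<open>Elements of the ground set: (i, False) is the non-hat number i,
  (i, True) is the hat number hat i.\<close>

definition ground :: "nat \<Rightarrow> (nat \<times> bool) set" where
  "ground n = {1..n} \<times> UNIV"

definition is_hat :: "nat \<times> bool \<Rightarrow> bool" where
  "is_hat x = snd x"

definition pairing :: "nat \<Rightarrow> (nat \<times> bool \<Rightarrow> nat \<times> bool) \<Rightarrow> bool" where
  "pairing n f \<longleftrightarrow> (\<forall>x. x \<notin> ground n \<longrightarrow> f x = x) \<and>
     (\<forall>x\<in>ground n. f x \<in> ground n \<and> f (f x) = x \<and> f x \<noteq> x)"

text \<open>f1 = (1 hat n)(2 hat 1)(3 hat 2)...(n hat(n-1)).\<close>
definition f1 :: "nat \<Rightarrow> nat \<times> bool \<Rightarrow> nat \<times> bool" where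
  "f1 n x = (if x \<in> ground n then
      (case x of (i, False) \<Rightarrow> (if i = 1 then n else i - 1, True)
               | (j, True) \<Rightarrow> (if j = n then 1 else j + 1, False))
    else x)"

definition f2 :: "nat \<Rightarrow> nat \<times> bool \<Rightarrow> nat \<times> bool" where
  "f2 n x = (if x \<in> ground n then (fst x, \<not> snd x) else x)"

definition stable_by :: "('a \<Rightarrow> 'a) \<Rightarrow> 'a set set \<Rightarrow> bool" where
  "stable_by f P \<longleftrightarrow> (\<forall>B\<in>P. f ` B = B)"

end

theory Submission
  imports Defs
begin

lemma swap_card:
  assumes fin: "finite B" and img: "f ` B = B"
    and sw: "\<forall>x\<in>B. is_hat (f x) \<longleftrightarrow> \<not> is_hat x"
  shows "card {x\<in>B. is_hat x} = card {x\<in>B. \<not> is_hat x}"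
proof -
  let ?H = "{x\<in>B. is_hat x}" and ?N = "{x\<in>B. \<not> is_hat x}"
  have fH: "finite ?H" "finite ?N" using fin by auto
  have "?H \<subseteq> f ` ?N"
  proof
    fix y assume y: "y \<in> ?H"
    then obtain x where x: "x \<in> B" "y = f x" using img by blast
    then show "y \<in> f ` ?N" using sw y by auto
  qed
  hence "card ?H \<le> card (f ` ?N)" using fH by (intro card_mono) auto
  also have "\<dots> \<le> card ?N" using fH by (simp add: card_image_le)
  finally have a: "card ?H \<le> card ?N" .
  have "?N \<subseteq> f ` ?H"
  proof
    fix y assume y: "y \<in> ?N"
    then obtain x where x: "x \<in> B" "y = f x" using img by blast
    then show "y \<in> f ` ?H" using sw y by auto
  qed
  hence "card ?N \<le> card (f ` ?H)" using fH by (intro card_mono) auto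
  also have "\<dots> \<le> card ?H" using fH by (simp add: card_image_le)
  finally have "card ?N \<le> card ?H" .
  with a show ?thesis by simp
qed

lemma finite_ground: "finite (ground n)"
  unfolding ground_def by simp

lemma f1_swap: "x \<in> ground n \<Longrightarrow> is_hat (f1 n x) \<longleftrightarrow> \<not> is_hat x"
  unfolding f1_def is_hat_def by (cases x; cases "snd x") auto

lemma f2_swap: "x \<in> ground n \<Longrightarrow> is_hat (f2 n x) \<longleftrightarrow> \<not> is_hat x"
  unfolding f2_def is_hat_def by auto

theorem lemma1:
  fixes n :: nat and f3 :: "nat \<times> bool \<Rightarrow> nat \<times> bool"
    and \<pi>1 \<pi>2 :: "(nat \<times> bool) set set"
  assumes "n \<ge> 1"
    and "pairing n f3"
    and "partition_on (ground n) \<pi>1" and "stable_by (f1 n) \<pi>1" and "stable_by f3 \<pi>1"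
    and "partition_on (ground n) \<pi>2" and "stable_by (f2 n) \<pi>2" and "stable_by f3 \<pi>2"
    and "\<forall>B\<in>\<pi>1. even (card B)" and "\<forall>B\<in>\<pi>2. even (card B)"
  shows "\<forall>B\<in>\<pi>1 \<union> \<pi>2. card {x\<in>B. is_hat x} = card {x\<in>B. \<not> is_hat x}"
proof
  fix B assume B: "B \<in> \<pi>1 \<union> \<pi>2"
  show "card {x\<in>B. is_hat x} = card {x\<in>B. \<not> is_hat x}"
  proof (cases "B \<in> \<pi>1")
    case True
    have sub: "B \<subseteq> ground n" using assms(3) True unfolding partition_on_def by blast
    show ?thesis
    proof (rule swap_card)
      show "finite B" using sub finite_ground finite_subset by blast
      show "f1 n ` B = B" using assms(4) True unfolding stable_by_def by blast
      show "\<forall>x\<in>B. is_hat (f1 n x) \<longleftrightarrow> \<not> is_hat x" using sub f1_swap by blast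
    qed
  next
    case False
    hence B2: "B \<in> \<pi>2" using B by blast
    have sub: "B \<subseteq> ground n" using assms(6) B2 unfolding partition_on_def by blast
    show ?thesis
    proof (rule swap_card)
      show "finite B" using sub finite_ground finite_subset by blast
      show "f2 n ` B = B" using assms(7) B2 unfolding stable_by_def by blast
      show "\<forall>x\<in>B. is_hat (f2 n x) \<longleftrightarrow> \<not> is_hat x" using sub f2_swap by blast
    qed
  qed
qed

end
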